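(* Let $G$ be a group and $\xi\colon G\to\mathbb{R}$ a (continuous, if $G$ is topological) polynomial map of degree $\deg\xi=d\ge1$. Then for every $s\in G$, the map $\varphi_\xi\colon g\mapsto(\partial_g\xi)(s)$ is a (continuous) polynomial map of degree $\deg\varphi_\xi=(d\dot-1)\dot+1$. The same holds for $g\mapsto(\overleftarrow{\partial}_g\xi)(s)$.
   Context: For $\xi\colon G\to\mathbb{R}$, $(\partial_g\xi)(h)=\xi(g^{-1}h)-\xi(h)$ (left difference) and $(\overleftarrow{\partial}_g\xi)(h)=\xi(hg)-\xi(h)$ (right difference). $\xi$ is a polynomial of degree at most $d$ if $\partial_{g_1}\cdots\partial_{g_{d+1}}\xi\equiv0$ for all $g_i$ (equivalently with right differences); $\deg\xi$ is the least such $d\in\mathbb{Z}_*=\{-\infty\}\cup\mathbb{N}_0$, with $\deg0=-\infty$. On $\mathbb{Z}_*$: $x\dot+y=x+y$ for $x,y\in\mathbb{N}_0$ and $-\infty$ if either is $-\infty$; $x\dot-y=x-y$ if $x\ge y\in\mathbb{N}_0$, and $-\infty$ if $x=-\infty$ or $x<y$. *)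

theory Defs
  imports "HOL-Algebra.Group" "HOL-Analysis.Analysis"
begin

text \<open>Extended degrees Z_* = {-inf} \<union> N_0, modelled as nat option (None = -inf).\<close>

fun zdot_plus :: "nat option \<Rightarrow> nat option \<Rightarrow> nat option" where
  "zdot_plus (Some x) (Some y) = Some (x + y)"
| "zdot_plus _ _ = None"

fun zdot_minus :: "nat option \<Rightarrow> nat option \<Rightarrow> nat option" where
  "zdot_minus (Some x) (Some y) = (if y \<le> x then Some (x - y) else None)"
| "zdot_minus _ _ = None"

definition ldiff :: "('a, 'b) monoid_scheme \<Rightarrow> 'a \<Rightarrow> ('a \<Rightarrow> real) \<Rightarrow> 'a \<Rightarrow> real" where
  "ldiff G g xi h = xi (inv\<^bsub>G\<^esub> g \<otimes>\<^bsub>G\<^esub> h) - xi h"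

definition rdiff :: "('a, 'b) monoid_scheme \<Rightarrow> 'a \<Rightarrow> ('a \<Rightarrow> real) \<Rightarrow> 'a \<Rightarrow> real" where
  "rdiff G g xi h = xi (h \<otimes>\<^bsub>G\<^esub> g) - xi h"

fun ldiffs :: "('a, 'b) monoid_scheme \<Rightarrow> 'a list \<Rightarrow> ('a \<Rightarrow> real) \<Rightarrow> 'a \<Rightarrow> real" where
  "ldiffs G [] xi = xi"
| "ldiffs G (g # gs) xi = ldiff G g (ldiffs G gs xi)"

definition poly_deg_le :: "('a, 'b) monoid_scheme \<Rightarrow> ('a \<Rightarrow> real) \<Rightarrow> nat \<Rightarrow> bool" where
  "poly_deg_le G xi d \<longleftrightarrow>
     (\<forall>gs. length gs = Suc d \<and> set gs \<subseteq> carrier G \<longrightarrow>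
        (\<forall>h\<in>carrier G. ldiffs G gs xi h = 0))"

definition is_poly_map :: "('a, 'b) monoid_scheme \<Rightarrow> ('a \<Rightarrow> real) \<Rightarrow> bool" where
  "is_poly_map G xi \<longleftrightarrow> (\<exists>d. poly_deg_le G xi d)"

definition poly_deg :: "('a, 'b) monoid_scheme \<Rightarrow> ('a \<Rightarrow> real) \<Rightarrow> nat option" where
  "poly_deg G xi = (if \<forall>h\<in>carrier G. xi h = 0 then None
                    else Some (LEAST d. poly_deg_le G xi d))"

definition group_topology :: "('a, 'b) monoid_scheme \<Rightarrow> 'a topology \<Rightarrow> bool" where
  "group_topology G T \<longleftrightarrow> topspace T = carrier G
     \<and> continuous_map (prod_topology T T) T (\<lambda>(x, y). x \<otimes>\<^bsub>G\<^esub> y)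
     \<and> continuous_map T T (\<lambda>x. inv\<^bsub>G\<^esub> x)"

end

theory Submission
  imports Defs
begin

fun rdiffs :: "('a, 'b) monoid_scheme \<Rightarrow> 'a list \<Rightarrow> ('a \<Rightarrow> real) \<Rightarrow> 'a \<Rightarrow> real" where
  "rdiffs G [] xi = xi"
| "rdiffs G (g # gs) xi = rdiff G g (rdiffs G gs xi)"

definition rdeg_le :: "('a, 'b) monoid_scheme \<Rightarrow> ('a \<Rightarrow> real) \<Rightarrow> nat \<Rightarrow> bool" where
  "rdeg_le G xi d \<longleftrightarrow>
     (\<forall>gs. length gs = Suc d \<and> set gs \<subseteq> carrier G \<longrightarrow>
        (\<forall>h\<in>carrier G. rdiffs G gs xi h = 0))"

lemma ldiffs_snoc: "ldiffs G (gs @ [g]) f = ldiffs G gs (ldiff G g f)"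
  by (induction gs) auto

lemma rdiffs_snoc: "rdiffs G (gs @ [g]) f = rdiffs G gs (rdiff G g f)"
  by (induction gs) auto

context group
begin

lemma cancel1 [simp]: "x \<in> carrier G \<Longrightarrow> y \<in> carrier G \<Longrightarrow> x \<otimes> (inv x \<otimes> y) = y"
  by (simp add: m_assoc[symmetric])

lemma cancel2 [simp]: "x \<in> carrier G \<Longrightarrow> y \<in> carrier G \<Longrightarrow> inv x \<otimes> (x \<otimes> y) = y"
  by (simp add: m_assoc[symmetric])

lemma ldiffs_cong:
  assumes "\<And>x. x \<in> carrier G \<Longrightarrow> F x = F' x" "set gs \<subseteq> carrier G" "h \<in> carrier G"
  shows "ldiffs G gs F h = ldiffs G gs F' h"
  using assms(2,3)
  by (induction gs arbitrary: h) (auto simp: ldiff_def assms(1))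

lemma pdl_cong:
  assumes "\<And>x. x \<in> carrier G \<Longrightarrow> F x = F' x"
  shows "poly_deg_le G F n \<longleftrightarrow> poly_deg_le G F' n"
  unfolding poly_deg_le_def using ldiffs_cong[OF assms] ldiffs_cong[of F' F] assms
  by metis

lemma comm_lr:
  assumes "g \<in> carrier G" "k \<in> carrier G" "h \<in> carrier G"
  shows "ldiff G g (rdiff G k F) h = rdiff G k (ldiff G g F) h"
  using assms by (simp add: ldiff_def rdiff_def m_assoc)

lemma claim0:
  assumes "poly_deg_le G f 0" "k \<in> carrier G" "h \<in> carrier G"
  shows "rdiff G k f h = 0"
proof -
  let ?g = "h \<otimes> inv k \<otimes> inv h"
  have g: "?g \<in> carrier G" using assms by simp
  have "ldiffs G [?g] f h = 0" using assms(1)[unfolded poly_deg_le_def, rule_format, of "[?g]" h] g assms(3) by simp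
  moreover have "inv ?g \<otimes> h = h \<otimes> k"
    using assms by (simp add: inv_mult_group m_assoc)
  ultimately show ?thesis by (simp add: ldiff_def rdiff_def)
qed

lemma claimS:
  assumes "poly_deg_le G f (Suc m)" "k \<in> carrier G"
  shows "poly_deg_le G (rdiff G k f) m"
  using assms
proof (induction m arbitrary: f)
  case 0
  show ?case unfolding poly_deg_le_def
  proof (intro allI impI ballI)
    fix gs h assume gs: "length gs = Suc 0 \<and> set gs \<subseteq> carrier G" and h: "h \<in> carrier G"
    then obtain g where g: "gs = [g]" "g \<in> carrier G" by (cases gs) auto
    have "poly_deg_le G (ldiff G g f) 0"
      unfolding poly_deg_le_def
    proof (intro allI impI ballI)
      fix hs x assume "length hs = Suc 0 \<and> set hs \<subseteq> carrier G" "x \<in> carrier G"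
      then obtain a where "hs = [a]" "a \<in> carrier G" by (cases hs) auto
      then show "ldiffs G hs (ldiff G g f) x = 0"
        using "0.prems"(1) g \<open>x \<in> carrier G\<close> unfolding poly_deg_le_def
        by (metis ldiffs_snoc append_Cons append_Nil empty_subsetI insert_subset
            length_Cons list.set(1) list.set(2) list.size(3))
    qed
    then show "ldiffs G gs (rdiff G k f) h = 0"
      using g h "0.prems"(2) claim0 comm_lr by simp
  qed
next
  case (Suc m)
  show ?case unfolding poly_deg_le_def
  proof (intro allI impI ballI)
    fix gs h assume gs: "length gs = Suc (Suc m) \<and> set gs \<subseteq> carrier G" and h: "h \<in> carrier G"
    then obtain gs' g where g: "gs = gs' @ [g]" "g \<in> carrier G" "set gs' \<subseteq> carrier G"
      "length gs' = Suc m"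
      by (cases gs rule: rev_cases) auto
    have "poly_deg_le G (ldiff G g f) (Suc m)"
      unfolding poly_deg_le_def
    proof (intro allI impI ballI)
      fix hs x assume "length hs = Suc (Suc m) \<and> set hs \<subseteq> carrier G" "x \<in> carrier G"
      then show "ldiffs G hs (ldiff G g f) x = 0"
        using Suc.prems(1) g unfolding poly_deg_le_def
        by (metis ldiffs_snoc length_append_singleton set_append Un_subset_iff
            empty_subsetI insert_subset list.set(1) list.set(2))
    qed
    then have "poly_deg_le G (rdiff G k (ldiff G g f)) m" using Suc.IH Suc.prems(2) by blast
    then have "ldiffs G gs' (rdiff G k (ldiff G g f)) h = 0"
      using g h unfolding poly_deg_le_def by auto
    moreover have "ldiffs G gs' (ldiff G g (rdiff G k f)) h = ldiffs G gs' (rdiff G k (ldiff G g f)) h"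
      by (rule ldiffs_cong) (use comm_lr g Suc.prems(2) h in auto)
    ultimately show "ldiffs G gs (rdiff G k f) h = 0" using g by (simp add: ldiffs_snoc)
  qed
qed

lemma left_right:
  assumes "poly_deg_le G f n"
  shows "rdeg_le G f n"
  using assms
proof (induction n arbitrary: f)
  case 0
  show ?case unfolding rdeg_le_def
  proof (intro allI impI ballI)
    fix ks h assume "length ks = Suc 0 \<and> set ks \<subseteq> carrier G" "h \<in> carrier G"
    then obtain k where "ks = [k]" "k \<in> carrier G" by (cases ks) auto
    then show "rdiffs G ks f h = 0" using claim0 0 \<open>h \<in> carrier G\<close> by simp
  qed
next
  case (Suc m)
  show ?case unfolding rdeg_le_def
  proof (intro allI impI ballI)
    fix ks h assume ks: "length ks = Suc (Suc m) \<and> set ks \<subseteq> carrier G" and h: "h \<in> carrier G"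
    then obtain ks' k where k: "ks = ks' @ [k]" "k \<in> carrier G" "set ks' \<subseteq> carrier G"
      "length ks' = Suc m"
      by (cases ks rule: rev_cases) auto
    have "rdeg_le G (rdiff G k f) m" using Suc.IH claimS Suc.prems k by blast
    then show "rdiffs G ks f h = 0" using k h unfolding rdeg_le_def by (simp add: rdiffs_snoc)
  qed
qed

lemma ldiffs_inv:
  assumes "set gs \<subseteq> carrier G" "h \<in> carrier G"
  shows "ldiffs G gs (\<lambda>x. f (inv x)) h = rdiffs G gs f (inv h)"
  using assms
proof (induction gs arbitrary: h)
  case Nil then show ?case by simp
next
  case (Cons g gs)
  have "inv (inv g \<otimes> h) = inv h \<otimes> g" using Cons.prems by (simp add: inv_mult_group)
  then show ?case using Cons by (simp add: ldiff_def rdiff_def)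
qed

lemma pdl_inv_rdeg: "poly_deg_le G (\<lambda>x. f (inv x)) n \<longleftrightarrow> rdeg_le G f n"
proof
  assume a: "poly_deg_le G (\<lambda>x. f (inv x)) n"
  show "rdeg_le G f n" unfolding rdeg_le_def
  proof (intro allI impI ballI)
    fix gs h assume gs: "length gs = Suc n \<and> set gs \<subseteq> carrier G" and h: "h \<in> carrier G"
    have "rdiffs G gs f (inv (inv h)) = 0"
      using ldiffs_inv[of gs "inv h" f] a gs h unfolding poly_deg_le_def by auto
    then show "rdiffs G gs f h = 0" using h by simp
  qed
next
  assume "rdeg_le G f n"
  then show "poly_deg_le G (\<lambda>x. f (inv x)) n"
    unfolding poly_deg_le_def rdeg_le_def using ldiffs_inv by auto
qed

lemma pdl_inv: "poly_deg_le G (\<lambda>x. f (inv x)) n \<longleftrightarrow> poly_deg_le G f n"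
proof
  assume "poly_deg_le G (\<lambda>x. f (inv x)) n"
  then have "rdeg_le G (\<lambda>x. f (inv x)) n" by (rule left_right)
  then have "poly_deg_le G (\<lambda>x. f (inv (inv x))) n" using pdl_inv_rdeg[of "\<lambda>x. f (inv x)"] by simp
  then show "poly_deg_le G f n" using pdl_cong[of "\<lambda>x. f (inv (inv x))" f] by simp
next
  assume "poly_deg_le G f n"
  then show "poly_deg_le G (\<lambda>x. f (inv x)) n" using left_right pdl_inv_rdeg by blast
qed

lemma ldiffs_transl:
  assumes "set gs \<subseteq> carrier G" "h \<in> carrier G" "k \<in> carrier G"
  shows "ldiffs G gs (\<lambda>x. f (k \<otimes> x)) h = ldiffs G (map (\<lambda>a. k \<otimes> a \<otimes> inv k) gs) f (k \<otimes> h)"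
  using assms(1,2)
proof (induction gs arbitrary: h)
  case Nil then show ?case by simp
next
  case (Cons g gs)
  have "k \<otimes> (inv g \<otimes> h) = inv (k \<otimes> g \<otimes> inv k) \<otimes> (k \<otimes> h)"
    using Cons.prems assms(3) by (simp add: inv_mult_group m_assoc)
  then show ?case using Cons assms(3) by (simp add: ldiff_def)
qed

lemma pdl_transl:
  assumes k: "k \<in> carrier G"
  shows "poly_deg_le G (\<lambda>x. f (k \<otimes> x)) n \<longleftrightarrow> poly_deg_le G f n"
proof
  assume a: "poly_deg_le G (\<lambda>x. f (k \<otimes> x)) n"
  show "poly_deg_le G f n" unfolding poly_deg_le_def
  proof (intro allI impI ballI)
    fix gs h assume gs: "length gs = Suc n \<and> set gs \<subseteq> carrier G" and h: "h \<in> carrier G"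
    let ?gs = "map (\<lambda>a. inv k \<otimes> a \<otimes> k) gs"
    have s: "set ?gs \<subseteq> carrier G" using gs k by auto
    have m: "map (\<lambda>a. k \<otimes> a \<otimes> inv k) ?gs = gs"
      using gs k by (auto simp: m_assoc intro!: map_idI)
    have "ldiffs G ?gs (\<lambda>x. f (k \<otimes> x)) (inv k \<otimes> h) = 0"
      using a s gs h k unfolding poly_deg_le_def by auto
    then show "ldiffs G gs f h = 0"
      using ldiffs_transl[OF s _ k, of "inv k \<otimes> h" f] m h k by (simp add: m_assoc[symmetric])
  qed
next
  assume a: "poly_deg_le G f n"
  show "poly_deg_le G (\<lambda>x. f (k \<otimes> x)) n"
    unfolding poly_deg_le_def
  proof (intro allI impI ballI)
    fix gs h assume gs: "length gs = Suc n \<and> set gs \<subseteq> carrier G" and h: "h \<in> carrier G"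
    let ?gs = "map (\<lambda>a. k \<otimes> a \<otimes> inv k) gs"
    have "length ?gs = Suc n" "set ?gs \<subseteq> carrier G" using gs k by auto
    then have "ldiffs G ?gs f (k \<otimes> h) = 0" using a h k unfolding poly_deg_le_def by auto
    then show "ldiffs G gs (\<lambda>x. f (k \<otimes> x)) h = 0" using ldiffs_transl gs h k by simp
  qed
qed

end

lemma ldiffs_const: "ldiffs G gs (\<lambda>x. f x - c) h = ldiffs G gs f h - (if gs = [] then c else 0)"
  by (induction gs arbitrary: h) (auto simp: ldiff_def)

lemma ldiffs_const': "length gs = Suc n \<Longrightarrow> ldiffs G gs (\<lambda>x. f x - c) h = ldiffs G gs f h"
  by (auto simp: ldiffs_const)

lemma pdl_const: "poly_deg_le G (\<lambda>x. f x - c) n \<longleftrightarrow> poly_deg_le G f n"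
  unfolding poly_deg_le_def using ldiffs_const' by metis

lemma ldiffs_zero: "ldiffs G gs (\<lambda>x. 0) h = 0"
  by (induction gs arbitrary: h) (auto simp: ldiff_def)

lemma deg_transfer:
  assumes "group G" "\<And>n. poly_deg_le G phi n \<longleftrightarrow> poly_deg_le G xi n"
    "is_poly_map G xi" "poly_deg G xi = Some d" "d \<ge> 1"
  shows "is_poly_map G phi \<and> poly_deg G phi = Some d"
proof -
  interpret group G by fact
  have L: "(LEAST n. poly_deg_le G xi n) = d" using assms(4)
    unfolding poly_deg_def by (auto split: if_splits)
  have "\<not> (\<forall>h\<in>carrier G. phi h = 0)"
  proof
    assume z: "\<forall>h\<in>carrier G. phi h = 0"
    have "poly_deg_le G phi 0" using pdl_cong[of phi "\<lambda>x. 0"] z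
      by (simp add: poly_deg_le_def ldiffs_zero)
    then have "poly_deg_le G xi 0" using assms(2) by blast
    then have "(LEAST n. poly_deg_le G xi n) = 0" by (rule Least_eq_0)
    then show False using L assms(5) by simp
  qed
  moreover have "poly_deg_le G phi = poly_deg_le G xi" using assms(2) by blast
  ultimately show ?thesis using assms(3) L unfolding poly_deg_def is_poly_map_def by simp
qed

theorem proposition7p6:
  fixes G :: "('a, 'b) monoid_scheme" and xi :: "'a \<Rightarrow> real" and d :: nat and s :: 'a
  assumes "group G"
    and "is_poly_map G xi"
    and "poly_deg G xi = Some d"
    and "d \<ge> 1"
    and "s \<in> carrier G"
  shows "is_poly_map G (\<lambda>g. ldiff G g xi s)
       \<and> poly_deg G (\<lambda>g. ldiff G g xi s) = zdot_plus (zdot_minus (Some d) (Some 1)) (Some 1)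
       \<and> is_poly_map G (\<lambda>g. rdiff G g xi s)
       \<and> poly_deg G (\<lambda>g. rdiff G g xi s) = zdot_plus (zdot_minus (Some d) (Some 1)) (Some 1)
       \<and> (\<forall>T. group_topology G T \<and> continuous_map T euclideanreal xi \<longrightarrow>
              continuous_map T euclideanreal (\<lambda>g. ldiff G g xi s)
            \<and> continuous_map T euclideanreal (\<lambda>g. rdiff G g xi s))"
proof -
  interpret group G by fact
  have zd: "zdot_plus (zdot_minus (Some d) (Some 1)) (Some 1) = Some d" using assms(4) by simp
  have l: "poly_deg_le G (\<lambda>g. ldiff G g xi s) n \<longleftrightarrow> poly_deg_le G xi n" for n
  proof -
    have "poly_deg_le G (\<lambda>g. ldiff G g xi s) n \<longleftrightarrow> poly_deg_le G (\<lambda>g. xi (inv\<^bsub>G\<^esub> g \<otimes>\<^bsub>G\<^esub> s)) n"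
      unfolding ldiff_def by (rule pdl_const)
    also have "\<dots> \<longleftrightarrow> poly_deg_le G (\<lambda>g. (\<lambda>x. xi (inv\<^bsub>G\<^esub> x)) (inv\<^bsub>G\<^esub> s \<otimes>\<^bsub>G\<^esub> g)) n"
      by (rule pdl_cong) (use assms(5) in \<open>simp add: inv_mult_group\<close>)
    also have "\<dots> \<longleftrightarrow> poly_deg_le G (\<lambda>x. xi (inv\<^bsub>G\<^esub> x)) n"
      by (rule pdl_transl) (use assms(5) in simp)
    also have "\<dots> \<longleftrightarrow> poly_deg_le G xi n" by (rule pdl_inv)
    finally show ?thesis .
  qed
  have r: "poly_deg_le G (\<lambda>g. rdiff G g xi s) n \<longleftrightarrow> poly_deg_le G xi n" for n
  proof -
    have "poly_deg_le G (\<lambda>g. rdiff G g xi s) n \<longleftrightarrow> poly_deg_le G (\<lambda>g. xi (s \<otimes>\<^bsub>G\<^esub> g)) n"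
      unfolding rdiff_def by (rule pdl_const)
    also have "\<dots> \<longleftrightarrow> poly_deg_le G xi n" by (rule pdl_transl) (use assms(5) in simp)
    finally show ?thesis .
  qed
  have c: "continuous_map T euclideanreal (\<lambda>g. ldiff G g xi s)
            \<and> continuous_map T euclideanreal (\<lambda>g. rdiff G g xi s)"
    if T: "group_topology G T" and xc: "continuous_map T euclideanreal xi" for T
  proof -
    have top: "topspace T = carrier G"
      and mul: "continuous_map (prod_topology T T) T (\<lambda>(x, y). x \<otimes>\<^bsub>G\<^esub> y)"
      and iv: "continuous_map T T (\<lambda>x. inv\<^bsub>G\<^esub> x)"
      using T unfolding group_topology_def by auto
    have sT: "s \<in> topspace T" using top assms(5) by simp
    have c1: "continuous_map T T (\<lambda>g. inv\<^bsub>G\<^esub> g \<otimes>\<^bsub>G\<^esub> s)"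
    proof -
      have "continuous_map T (prod_topology T T) (\<lambda>g. (inv\<^bsub>G\<^esub> g, s))"
        by (intro continuous_map_pairedI iv) (use sT in simp)
      from continuous_map_compose[OF this mul] show ?thesis by (simp add: o_def)
    qed
    have c2: "continuous_map T T (\<lambda>g. s \<otimes>\<^bsub>G\<^esub> g)"
    proof -
      have "continuous_map T (prod_topology T T) (\<lambda>g. (s, g))"
        by (intro continuous_map_pairedI) (use sT in simp_all)
      from continuous_map_compose[OF this mul] show ?thesis by (simp add: o_def)
    qed
    have "continuous_map T euclideanreal (\<lambda>g. xi (inv\<^bsub>G\<^esub> g \<otimes>\<^bsub>G\<^esub> s) - xi s)"
      by (intro continuous_map_diff continuous_map_compose[OF c1 xc, unfolded o_def]) simp
    moreover have "continuous_map T euclideanreal (\<lambda>g. xi (s \<otimes>\<^bsub>G\<^esub> g) - xi s)"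
      by (intro continuous_map_diff continuous_map_compose[OF c2 xc, unfolded o_def]) simp
    ultimately show ?thesis by (simp add: ldiff_def rdiff_def)
  qed
  show ?thesis
    using deg_transfer[OF assms(1) l assms(2-4)] deg_transfer[OF assms(1) r assms(2-4)] c zd
    by simp
qed

end
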